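(* Let $I$ be a non-degenerate interval and $f:I\to\mathbb{R}$ continuous with a monotone graph. Then for every $x\in I$ the approximate upper right Dini derivative of $f$ at $x$ equals the upper right Dini derivative $\limsup_{y\to x+}\frac{f(y)-f(x)}{y-x}$; and likewise each of the other three approximate Dini derivatives equals the corresponding Dini derivative at every point.
   Context: The graph $\{(x,f(x)):x\in I\}\subseteq\mathbb{R}^2$ carries the Euclidean metric; a metric space is monotone if there are a linear order $<$ and $c>0$ with $d(x,y)\le c\,d(x,z)$ whenever $x<y<z$. The approximate upper right Dini derivative is $\overline{f}^+_{ap}(x)=\inf\{t:\lim_{\delta\to0+}\delta^{-1}\lambda(\{y\in(x,x+\delta):\frac{f(y)-f(x)}{y-x}\le t\})=1\}$ ($\lambda$ Lebesgue measure); the other three approximate Dini derivatives are defined analogously. *)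

theory Defs
  imports "HOL-Analysis.Analysis"
begin

definition monotone_metric_space :: "'a set \<Rightarrow> ('a \<Rightarrow> 'a \<Rightarrow> real) \<Rightarrow> bool" where
  "monotone_metric_space S d \<longleftrightarrow>
     (\<exists>r c. strict_linear_order_on S r \<and> c > 0 \<and>
        (\<forall>x\<in>S. \<forall>y\<in>S. \<forall>z\<in>S. (x, y) \<in> r \<and> (y, z) \<in> r \<longrightarrow> d x y \<le> c * d x z))"

text \<open>Graph of f over I, as a subset of the Euclidean plane (real \<times> real carries the
  Euclidean metric dist (a,b) (c,d) = sqrt ((a-c)^2 + (b-d)^2)).\<close>
definition graph_on :: "real set \<Rightarrow> (real \<Rightarrow> real) \<Rightarrow> (real \<times> real) set" where
  "graph_on I f = (\<lambda>x. (x, f x)) ` I"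

definition diff_quot :: "(real \<Rightarrow> real) \<Rightarrow> real \<Rightarrow> real \<Rightarrow> real" where
  "diff_quot f x y = (f y - f x) / (y - x)"

definition dini_upper_right :: "(real \<Rightarrow> real) \<Rightarrow> real set \<Rightarrow> real \<Rightarrow> ereal" where
  "dini_upper_right f I x = Limsup (at x within (I \<inter> {x<..})) (\<lambda>y. ereal (diff_quot f x y))"
definition dini_lower_right :: "(real \<Rightarrow> real) \<Rightarrow> real set \<Rightarrow> real \<Rightarrow> ereal" where
  "dini_lower_right f I x = Liminf (at x within (I \<inter> {x<..})) (\<lambda>y. ereal (diff_quot f x y))"
definition dini_upper_left :: "(real \<Rightarrow> real) \<Rightarrow> real set \<Rightarrow> real \<Rightarrow> ereal" where
  "dini_upper_left f I x = Limsup (at x within (I \<inter> {..<x})) (\<lambda>y. ereal (diff_quot f x y))"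
definition dini_lower_left :: "(real \<Rightarrow> real) \<Rightarrow> real set \<Rightarrow> real \<Rightarrow> ereal" where
  "dini_lower_left f I x = Liminf (at x within (I \<inter> {..<x})) (\<lambda>y. ereal (diff_quot f x y))"

definition approx_upper_right :: "(real \<Rightarrow> real) \<Rightarrow> real set \<Rightarrow> real \<Rightarrow> ereal" where
  "approx_upper_right f I x = Inf (ereal ` {t. ((\<lambda>\<delta>. measure lebesgue
       {y \<in> I \<inter> {x<..<x+\<delta>}. diff_quot f x y \<le> t} / \<delta>) \<longlongrightarrow> 1) (at_right 0)})"
definition approx_lower_right :: "(real \<Rightarrow> real) \<Rightarrow> real set \<Rightarrow> real \<Rightarrow> ereal" where
  "approx_lower_right f I x = Sup (ereal ` {t. ((\<lambda>\<delta>. measure lebesgue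
       {y \<in> I \<inter> {x<..<x+\<delta>}. diff_quot f x y \<ge> t} / \<delta>) \<longlongrightarrow> 1) (at_right 0)})"
definition approx_upper_left :: "(real \<Rightarrow> real) \<Rightarrow> real set \<Rightarrow> real \<Rightarrow> ereal" where
  "approx_upper_left f I x = Inf (ereal ` {t. ((\<lambda>\<delta>. measure lebesgue
       {y \<in> I \<inter> {x-\<delta><..<x}. diff_quot f x y \<le> t} / \<delta>) \<longlongrightarrow> 1) (at_right 0)})"
definition approx_lower_left :: "(real \<Rightarrow> real) \<Rightarrow> real set \<Rightarrow> real \<Rightarrow> ereal" where
  "approx_lower_left f I x = Sup (ereal ` {t. ((\<lambda>\<delta>. measure lebesgue
       {y \<in> I \<inter> {x-\<delta><..<x}. diff_quot f x y \<ge> t} / \<delta>) \<longlongrightarrow> 1) (at_right 0)})"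

end

theory Submission
  imports Defs
begin


lemma side_lemma:
  fixes I :: "real set" and f :: "real \<Rightarrow> real" and r and c :: real
  defines "P \<equiv> (\<lambda>v. (v, f v))"
  assumes I: "is_interval I" and cf: "continuous_on I f"
    and so: "strict_linear_order_on (P ` I) r" and c: "c > 0"
    and mon: "\<forall>x\<in>P ` I. \<forall>y\<in>P ` I. \<forall>z\<in>P ` I. (x, y) \<in> r \<and> (y, z) \<in> r \<longrightarrow> dist x y \<le> c * dist x z"
    and u: "u \<in> I" and a: "a \<in> I" and b: "b \<in> I" and uab: "u \<notin> closed_segment a b"
    and Pa: "(P a, P u) \<in> r"
  shows "(P b, P u) \<in> r"
proof -
  define G where "G = P ` I"
  define q where "q = P u"
  have tr: "trans r" and irr: "irrefl r" and tot: "total_on G r"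
    using so unfolding strict_linear_order_on_def G_def by auto
  have irr': "(p, p) \<notin> r" for p using irr unfolding irrefl_def by blast
  have trr: "(x,y) \<in> r \<Longrightarrow> (y,z) \<in> r \<Longrightarrow> (x,z) \<in> r" for x y z using tr by (meson transD)
  have qG: "q \<in> G" using u unfolding q_def G_def by auto
  have mon': "\<And>x y z. x \<in> G \<Longrightarrow> y \<in> G \<Longrightarrow> z \<in> G \<Longrightarrow> (x,y) \<in> r \<Longrightarrow> (y,z) \<in> r \<Longrightarrow> dist x y \<le> c * dist x z"
    using mon unfolding G_def by blast
  define UA where "UA = (\<Union>p\<in>{p\<in>G. (p,q) \<in> r}. ball p (dist p q / (c+1)))"
  define UB where "UB = (\<Union>p\<in>{p\<in>G. (q,p) \<in> r}. ball p (dist q p / (c+1)))"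
  have oA: "open UA" and oB: "open UB" unfolding UA_def UB_def by auto
  have A1: "(p', q) \<in> r" if "p' \<in> G" "p' \<in> UA" for p'
  proof -
    from that obtain p where p: "p \<in> G" "(p,q) \<in> r" "dist p p' < dist p q / (c+1)"
      unfolding UA_def by auto
    have "p \<noteq> q" using p(2) irr' by metis
    hence dpos: "dist p q > 0" by simp
    have "dist p q / (c+1) < dist p q" using dpos c by (simp add: divide_less_eq)
    hence "p' \<noteq> q" using p(3) by auto
    moreover have "(q, p') \<notin> r"
    proof
      assume "(q, p') \<in> r"
      hence "dist p q \<le> c * dist p p'" using mon'[OF p(1) qG that(1) p(2)] by simp
      also have "\<dots> \<le> c * (dist p q / (c+1))" using p(3) c by (intro mult_left_mono) auto
      also have "\<dots> < dist p q" using dpos c by (simp add: field_simps)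
      finally show False by simp
    qed
    ultimately show ?thesis using tot that(1) qG unfolding total_on_def by blast
  qed
  have B1: "(q, p') \<in> r" if "p' \<in> G" "p' \<in> UB" for p'
  proof -
    from that obtain p where p: "p \<in> G" "(q,p) \<in> r" "dist p p' < dist q p / (c+1)"
      unfolding UB_def by auto
    have "p \<noteq> q" using p(2) irr' by metis
    hence dpos: "dist q p > 0" by simp
    have "dist q p / (c+1) < dist q p" using dpos c by (simp add: divide_less_eq)
    hence "p' \<noteq> q" using p(3) by (auto simp: dist_commute)
    moreover have "(p', q) \<notin> r"
    proof
      assume "(p', q) \<in> r"
      hence h: "dist p' q \<le> c * dist p' p" using mon'[OF that(1) qG p(1) _ p(2)] by simp
      have "dist q p \<le> dist q p' + dist p' p" by (rule dist_triangle)
      also have "\<dots> \<le> (c+1) * dist p' p" using h by (simp add: dist_commute algebra_simps)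
      also have "\<dots> < (c+1) * (dist q p / (c+1))" using p(3) c by (intro mult_strict_left_mono) (auto simp: dist_commute)
      also have "\<dots> = dist q p" using c by simp
      finally show False by simp
    qed
    ultimately show ?thesis using tot that(1) qG unfolding total_on_def by blast
  qed
  have cov: "p' \<in> UA \<union> UB" if "p' \<in> G" "p' \<noteq> q" for p'
  proof -
    have "dist p' q > 0" using that by simp
    hence "p' \<in> ball p' (dist p' q / (c+1))" "p' \<in> ball p' (dist q p' / (c+1))"
      using c by (auto simp: dist_commute)
    moreover have "(p',q) \<in> r \<or> (q,p') \<in> r" using tot that qG unfolding total_on_def by blast
    ultimately show ?thesis unfolding UA_def UB_def using that(1) by blast
  qed
  define K where "K = P ` closed_segment a b"
  have sub: "closed_segment a b \<subseteq> I" using mem_is_interval_1_I[OF I a b] mem_is_interval_1_I[OF I b a] by (auto simp: closed_segment_eq_real_ivl split: if_splits)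
  have cP: "continuous_on (closed_segment a b) P" unfolding P_def
    by (intro continuous_on_Pair continuous_on_id continuous_on_subset[OF cf sub])
  have conK: "connected K" unfolding K_def by (rule connected_continuous_image[OF cP]) simp
  have KG: "K \<subseteq> G" unfolding K_def G_def using sub by (rule image_mono)
  have qK: "q \<notin> K" using uab unfolding K_def q_def P_def by (simp add: image_iff)
  have KU: "K \<subseteq> UA \<union> UB"
  proof
    fix p' assume "p' \<in> K"
    thus "p' \<in> UA \<union> UB" using cov[of p'] KG qK by (metis subsetD)
  qed
  have KD: "UA \<inter> UB \<inter> K = {}"
  proof (rule ccontr)
    assume "UA \<inter> UB \<inter> K \<noteq> {}"
    then obtain p' where "p' \<in> UA" "p' \<in> UB" "p' \<in> K" by blast
    hence "(p',q) \<in> r" "(q,p') \<in> r" using A1[of p'] B1[of p'] KG by blast+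
    thus False using trr irr' by metis
  qed
  have disj: "UA \<inter> K = {} \<or> UB \<inter> K = {}" by (rule connectedD[OF conK oA oB KD KU])
  have PaK: "P a \<in> K" and PbK: "P b \<in> K" unfolding K_def by auto
  have PaU: "P a \<in> UA"
  proof -
    have "P a \<noteq> q" using Pa irr' unfolding q_def by metis
    hence "P a \<in> UA \<union> UB" using KU PaK by blast
    moreover have "P a \<notin> UB"
    proof
      assume "P a \<in> UB"
      hence "(q, P a) \<in> r" using B1 KG PaK by blast
      thus False using Pa trr irr' unfolding q_def by metis
    qed
    ultimately show ?thesis by blast
  qed
  have "UB \<inter> K = {}" using disj PaU PaK by blast
  hence "P b \<in> UA" using KU PbK by blast
  thus ?thesis using A1 KG PbK unfolding q_def by blast
qed

lemma side_iff:
  fixes I :: "real set" and f :: "real \<Rightarrow> real" and r and c :: real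
  assumes I: "is_interval I" and cf: "continuous_on I f"
    and so: "strict_linear_order_on ((\<lambda>v. (v, f v)) ` I) r" and c: "c > 0"
    and mon: "\<forall>x\<in>(\<lambda>v. (v, f v)) ` I. \<forall>y\<in>(\<lambda>v. (v, f v)) ` I. \<forall>z\<in>(\<lambda>v. (v, f v)) ` I. (x, y) \<in> r \<and> (y, z) \<in> r \<longrightarrow> dist x y \<le> c * dist x z"
    and u: "u \<in> I" and a: "a \<in> I" and b: "b \<in> I" and uab: "u \<notin> closed_segment a b"
  shows "((a, f a), (u, f u)) \<in> r \<longleftrightarrow> ((b, f b), (u, f u)) \<in> r"
  using side_lemma[OF I cf so c mon u a b uab] side_lemma[OF I cf so c mon u b a] uab
  by (auto simp: closed_segment_commute)

lemma between:
  fixes I :: "real set" and f :: "real \<Rightarrow> real" and r and c :: real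
  assumes I: "is_interval I" and cf: "continuous_on I f"
    and so: "strict_linear_order_on ((\<lambda>v. (v, f v)) ` I) r" and c: "c > 0"
    and mon: "\<forall>x\<in>(\<lambda>v. (v, f v)) ` I. \<forall>y\<in>(\<lambda>v. (v, f v)) ` I. \<forall>z\<in>(\<lambda>v. (v, f v)) ` I. (x, y) \<in> r \<and> (y, z) \<in> r \<longrightarrow> dist x y \<le> c * dist x z"
    and z: "z \<in> I" and y: "y \<in> I" and w: "w \<in> I" and zy: "z < y" and yw: "y < w"
  shows "(((z, f z), (y, f y)) \<in> r \<and> ((y, f y), (w, f w)) \<in> r) \<or>
         (((w, f w), (y, f y)) \<in> r \<and> ((y, f y), (z, f z)) \<in> r)"
proof -
  have tr: "trans r" and irr: "irrefl r" and tot: "total_on ((\<lambda>v. (v, f v)) ` I) r"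
    using so unfolding strict_linear_order_on_def by auto
  have irr': "\<And>p. (p, p) \<notin> r" using irr unfolding irrefl_def by blast
  have trr: "\<And>x y z. (x,y) \<in> r \<Longrightarrow> (y,z) \<in> r \<Longrightarrow> (x,z) \<in> r" using tr by (meson transD)
  define Pz where "Pz = (z, f z)"
  define Py where "Py = (y, f y)"
  define Pw where "Pw = (w, f w)"
  have S1: "(Pz, Pw) \<in> r \<longleftrightarrow> (Py, Pw) \<in> r" unfolding Pz_def Pw_def Py_def
    by (rule side_iff[OF I cf so c mon w z y]) (use zy yw in \<open>auto simp: closed_segment_eq_real_ivl\<close>)
  have S2: "(Py, Pz) \<in> r \<longleftrightarrow> (Pw, Pz) \<in> r" unfolding Pz_def Pw_def Py_def
    by (rule side_iff[OF I cf so c mon z y w]) (use zy yw in \<open>auto simp: closed_segment_eq_real_ivl\<close>)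
  have t1: "(Pz, Py) \<in> r \<or> (Py, Pz) \<in> r" using tot z y zy unfolding total_on_def Pz_def Py_def by auto
  have t2: "(Pz, Pw) \<in> r \<or> (Pw, Pz) \<in> r" using tot z w zy yw unfolding total_on_def Pz_def Pw_def by auto
  have t3: "(Py, Pw) \<in> r \<or> (Pw, Py) \<in> r" using tot y w yw unfolding total_on_def Py_def Pw_def by auto
  have "((Pz, Py) \<in> r \<and> (Py, Pw) \<in> r) \<or> ((Pw, Py) \<in> r \<and> (Py, Pz) \<in> r)"
    using S1 S2 t1 t2 t3 trr irr' by metis
  thus ?thesis unfolding Pz_def Py_def Pw_def .
qed

lemma NR_from_monotone:
  fixes I :: "real set" and f :: "real \<Rightarrow> real"
  assumes I: "is_interval I" and cf: "continuous_on I f"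
    and m: "monotone_metric_space (graph_on I f) dist"
  shows "\<exists>K\<ge>1. \<forall>z\<in>I. \<forall>y\<in>I. \<forall>w\<in>I. z < y \<and> y < w \<longrightarrow>
     dist (z, f z) (y, f y) \<le> K * dist (z, f z) (w, f w) \<and>
     dist (w, f w) (y, f y) \<le> K * dist (w, f w) (z, f z)"
proof -
  obtain r c where so: "strict_linear_order_on ((\<lambda>v. (v, f v)) ` I) r" and c: "c > 0"
    and mon: "\<forall>x\<in>(\<lambda>v. (v, f v)) ` I. \<forall>y\<in>(\<lambda>v. (v, f v)) ` I. \<forall>z\<in>(\<lambda>v. (v, f v)) ` I. (x, y) \<in> r \<and> (y, z) \<in> r \<longrightarrow> dist x y \<le> c * dist x z"
    using m unfolding monotone_metric_space_def graph_on_def by blast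
  show ?thesis
  proof (intro exI[of _ "c+1"] conjI ballI impI)
    show "1 \<le> c + 1" using c by simp
    fix z y w assume z: "z \<in> I" and y: "y \<in> I" and w: "w \<in> I" and zyw: "z < y \<and> y < w"
    define Pz where "Pz = (z, f z)"
    define Py where "Py = (y, f y)"
    define Pw where "Pw = (w, f w)"
    have G: "Pz \<in> (\<lambda>v. (v, f v)) ` I" "Py \<in> (\<lambda>v. (v, f v)) ` I" "Pw \<in> (\<lambda>v. (v, f v)) ` I"
      using z y w unfolding Pz_def Py_def Pw_def by auto
    have bt: "((Pz, Py) \<in> r \<and> (Py, Pw) \<in> r) \<or> ((Pw, Py) \<in> r \<and> (Py, Pz) \<in> r)"
      using between[OF I cf so c mon z y w] zyw unfolding Pz_def Py_def Pw_def by blast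
    have "dist Pz Py \<le> (c+1) * dist Pz Pw \<and> dist Pw Py \<le> (c+1) * dist Pw Pz"
    proof (cases "(Pz, Py) \<in> r \<and> (Py, Pw) \<in> r")
      case True
      hence h: "dist Pz Py \<le> c * dist Pz Pw" using mon G by blast
      have "dist Pw Py \<le> dist Pw Pz + dist Pz Py" by (rule dist_triangle)
      moreover have "dist Pz Pw = dist Pw Pz" "dist Py Pz = dist Pz Py" "dist Py Pw = dist Pw Py" by (simp_all add: dist_commute)
      moreover have "(c+1) * dist Pz Pw = c * dist Pz Pw + dist Pz Pw" "(c+1)*dist Pw Pz = c * dist Pw Pz + dist Pw Pz" by (simp_all add: algebra_simps)
      moreover have "c * dist Pz Pw = c * dist Pw Pz" by (simp add: dist_commute)
      ultimately show ?thesis using h c zero_le_dist[of Pz Pw] zero_le_dist[of Pw Pz] by linarith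
    next
      case False
      hence "(Pw, Py) \<in> r \<and> (Py, Pz) \<in> r" using bt by blast
      hence h: "dist Pw Py \<le> c * dist Pw Pz" using mon G by blast
      have "dist Pz Py \<le> dist Pz Pw + dist Pw Py" by (rule dist_triangle)
      moreover have "dist Pz Pw = dist Pw Pz" "dist Py Pz = dist Pz Py" "dist Py Pw = dist Pw Py" by (simp_all add: dist_commute)
      moreover have "(c+1) * dist Pz Pw = c * dist Pz Pw + dist Pz Pw" "(c+1)*dist Pw Pz = c * dist Pw Pz + dist Pw Pz" by (simp_all add: algebra_simps)
      moreover have "c * dist Pz Pw = c * dist Pw Pz" by (simp add: dist_commute)
      ultimately show ?thesis using h c zero_le_dist[of Pz Pw] zero_le_dist[of Pw Pz] by linarith
    qed
    hence fin: "dist (z, f z) (y, f y) \<le> (c + 1) * dist (z, f z) (w, f w) \<and>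
      dist (w, f w) (y, f y) \<le> (c + 1) * dist (w, f w) (z, f z)" by (simp only: Pz_def Py_def Pw_def)
    thus "dist (z, f z) (y, f y) \<le> (c + 1) * dist (z, f z) (w, f w)" by blast
    show "dist (w, f w) (y, f y) \<le> (c + 1) * dist (w, f w) (z, f z)" using fin by blast
  qed
qed

lemma core_right:
  fixes f :: "real \<Rightarrow> real" and I and x x1 K t s :: real
  assumes I: "is_interval I" and cf: "continuous_on I f"
    and NR: "\<forall>z\<in>I. \<forall>y\<in>I. \<forall>w\<in>I. z < y \<and> y < w \<longrightarrow> dist (z, f z) (y, f y) \<le> K * dist (z, f z) (w, f w)"
    and K: "K \<ge> 1" and x: "x \<in> I" and x1: "x1 \<in> I" and xx1: "x < x1" and ts: "t < s"
    and freq: "\<forall>d>0. \<exists>y\<in>I. x < y \<and> y < x + d \<and> diff_quot f x y > s"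
  shows "\<exists>e>0. \<forall>d>0. \<exists>\<delta>>0. \<delta> < d \<and> (\<exists>a. x \<le> a \<and> a + e*\<delta> \<le> x + \<delta> \<and>
            (\<forall>y. a < y \<and> y < a + e*\<delta> \<longrightarrow> y \<in> I \<and> diff_quot f x y > t))"
proof -
  define e0 where "e0 = min (1/2) ((s-t)/(K*(4+4*\<bar>t\<bar>)))"
  have Kpos: "K > 0" using K by simp
  have den: "K*(4+4*\<bar>t\<bar>) > 0" using Kpos by (simp add: add_pos_nonneg)
  have e0pos: "e0 > 0" unfolding e0_def using ts den by simp
  have e0half: "e0 \<le> 1/2" unfolding e0_def by (rule min.cobounded1)
  have e0K: "K*e0*(4+4*\<bar>t\<bar>) \<le> s - t"
  proof -
    have "e0 \<le> (s-t)/(K*(4+4*\<bar>t\<bar>))" unfolding e0_def by simp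
    hence "e0 * (K*(4+4*\<bar>t\<bar>)) \<le> s - t" using den by (simp add: le_divide_eq)
    thus ?thesis by (simp add: algebra_simps)
  qed
  show ?thesis
  proof (rule exI[of _ "e0/2"], intro conjI allI impI)
    show "e0/2 > 0" using e0pos by simp
    fix d :: real assume d: "d > 0"
    define d' where "d' = min (d/2) ((x1-x)/2)"
    have d'pos: "d' > 0" unfolding d'_def using d xx1 by simp
    obtain y where y: "y \<in> I" "x < y" "y < x + d'" "diff_quot f x y > s" using freq d'pos by blast
    define h where "h = y - x"
    have hpos: "h > 0" unfolding h_def using y by simp
    have hy: "y = x + h" unfolding h_def by simp
    define \<delta> where "\<delta> = (1+e0)*h"
    have A0: "e0*h > 0" using e0pos hpos by simp
    have A1: "e0*h \<le> h/2" using e0half hpos by (simp add: mult_right_mono)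
    have dl: "\<delta> = h + e0*h" unfolding \<delta>_def by (simp add: algebra_simps)
    have "h < d'" unfolding h_def using y by simp
    hence h2: "2*h < d" "x + 2*h < x1" unfolding d'_def by auto
    have inI: "v \<in> I" if "x \<le> v" "v \<le> x + 2*h" for v
      using mem_is_interval_1_I[OF I x x1] that h2 by auto
    have fy: "f y - f x > s*h"
    proof -
      have "(f y - f x)/h > s" using y(4) unfolding diff_quot_def h_def by simp
      thus ?thesis using hpos by (simp add: pos_less_divide_eq mult.commute)
    qed
    define L where "L = (\<lambda>v. f x + t*(v - x))"
    have good: "diff_quot f x v > t" if "x < v" "f v > L v" for v
    proof -
      have "f v - f x > t*(v-x)" using that(2) unfolding L_def by simp
      thus ?thesis unfolding diff_quot_def using that(1) by (simp add: pos_less_divide_eq)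
    qed
    have ediff: "e0/2*\<delta> \<le> e0*h"
    proof -
      have q1: "e0/2*\<delta> = e0*h/2 + (e0*h)*e0/2" unfolding \<delta>_def by (simp add: algebra_simps)
      have q2: "(e0*h)*e0/2 \<le> (e0*h)*(1/2)/2" using e0half A0 by (intro divide_right_mono mult_left_mono) auto
      show ?thesis using q1 q2 A0 by linarith
    qed
    show "\<exists>\<delta>>0. \<delta> < d \<and> (\<exists>a. x \<le> a \<and> a + e0/2*\<delta> \<le> x + \<delta> \<and>
            (\<forall>y. a < y \<and> y < a + e0/2*\<delta> \<longrightarrow> y \<in> I \<and> diff_quot f x y > t))"
    proof (rule exI[of _ \<delta>], intro conjI)
      show "\<delta> > 0" using dl hpos A0 by simp
      show "\<delta> < d" using dl A1 h2 hpos by linarith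
      show "\<exists>a. x \<le> a \<and> a + e0/2*\<delta> \<le> x + \<delta> \<and>
            (\<forall>y. a < y \<and> y < a + e0/2*\<delta> \<longrightarrow> y \<in> I \<and> diff_quot f x y > t)"
      proof (cases "\<forall>z. y - e0*h < z \<and> z < y \<longrightarrow> f z > L z")
        case True
        show ?thesis
        proof (rule exI[of _ "y - e0*h"], intro conjI allI impI)
          show "x \<le> y - e0*h" using A1 hpos using hy by linarith
          show "y - e0*h + e0/2*\<delta> \<le> x + \<delta>" using ediff dl A0 hy by linarith
          fix v assume v: "y - e0*h < v \<and> v < y - e0*h + e0/2*\<delta>"
          have v1: "x < v" "v < y" using v A1 ediff hpos using hy by linarith+
          show "v \<in> I" using inI v1 hpos using hy by auto
          show "diff_quot f x v > t" using good[OF v1(1)] True v v1 by blast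
        qed
      next
        case False
        then obtain z0 where z0: "y - e0*h < z0" "z0 < y" "f z0 \<le> L z0" by auto
        have z0x: "x < z0" using z0 A1 hpos using hy by linarith
        have sub1: "{z0..y} \<subseteq> I" using inI z0x y hpos using hy by auto
        have cL: "continuous_on {z0..y} (\<lambda>v. f v - L v)" unfolding L_def
          by (intro continuous_intros continuous_on_subset[OF cf sub1])
        have phiy: "f y - L y > (s-t)*h" using fy unfolding L_def h_def by (simp add: algebra_simps)
        have "(s-t)*h > 0" using ts hpos by simp
        have "\<exists>z. z0 \<le> z \<and> z \<le> y \<and> f z - L z = 0"
          using z0 phiy \<open>(s-t)*h > 0\<close> by (intro IVT'[of "\<lambda>v. f v - L v", OF _ _ _ cL]) auto
        then obtain z where z: "z0 \<le> z" "z \<le> y" "f z - L z = 0" by blast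
        have zy: "z < y"
        proof -
          have "z \<noteq> y" using z(3) phiy \<open>(s-t)*h > 0\<close> by auto
          thus ?thesis using z(2) by simp
        qed
        have zx: "x < z" using z0x z by simp
        have zI: "z \<in> I" using sub1 z by auto
        have yz: "y - z < e0*h" using z z0 by simp
        have ty: "\<bar>t*(y-z)\<bar> \<le> \<bar>t\<bar>*(e0*h)" using yz zy by (simp add: abs_mult mult_left_mono)
        have key1: "f y - f z \<ge> (s-t)*h - \<bar>t\<bar>*(e0*h)"
        proof -
          have "f y - f z = (f y - L y) + t*(y - z)" using z(3) unfolding L_def by (simp add: algebra_simps)
          moreover have "-\<bar>t*(y-z)\<bar> \<le> t*(y-z)" by simp
          ultimately show ?thesis using phiy ty by linarith
        qed
        have arith: "(s-t)*h > \<bar>t\<bar>*(e0*h) + 2*K*(e0*h) + 2*K*\<bar>t\<bar>*(e0*h)"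
        proof -
          have "K*e0*(4+4*\<bar>t\<bar>)*h \<le> (s-t)*h" using e0K hpos by (simp add: mult_right_mono)
          moreover have "\<bar>t\<bar>*(e0*h) \<le> K*\<bar>t\<bar>*(e0*h)" using mult_right_mono[OF K, of "\<bar>t\<bar>*(e0*h)"] A0 by (simp add: mult.assoc)
          moreover have "K*(e0*h) > 0" using Kpos A0 by simp
          moreover have "K*\<bar>t\<bar>*(e0*h) \<ge> 0" using Kpos A0 by simp
          moreover have "K*e0*(4+4*\<bar>t\<bar>)*h = 4*(K*(e0*h)) + 4*(K*\<bar>t\<bar>*(e0*h))" by (simp add: algebra_simps)
          moreover have "2*K*(e0*h) = 2*(K*(e0*h))" "2*K*\<bar>t\<bar>*(e0*h) = 2*(K*\<bar>t\<bar>*(e0*h))" by simp_all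
          ultimately show ?thesis by linarith
        qed
        have nn1: "K*(e0*h) \<ge> 0" "K*\<bar>t\<bar>*(e0*h) \<ge> 0" using Kpos A0 by simp_all
        have distb: "f y - f z \<le> K*(\<bar>v - z\<bar> + \<bar>f v - f z\<bar>)" if "y < v" "v \<in> I" for v
        proof -
          have "\<bar>f z - f y\<bar> \<le> dist (z, f z) (y, f y)"
            unfolding dist_Pair_Pair dist_real_def by (rule real_sqrt_sum_squares_ge2)
          hence "f y - f z \<le> dist (z, f z) (y, f y)" by linarith
          also have "\<dots> \<le> K * dist (z, f z) (v, f v)" using NR zI y(1) that zy by blast
          also have "dist (z, f z) (v, f v) \<le> \<bar>v - z\<bar> + \<bar>f v - f z\<bar>"
          proof -
            have "dist (z, f z) (v, f v) \<le> \<bar>z - v\<bar> + \<bar>f z - f v\<bar>"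
              unfolding dist_Pair_Pair dist_real_def using sqrt_sum_squares_le_sum_abs[of "z - v" "f z - f v"] by simp
            thus ?thesis by (simp add: abs_minus_commute)
          qed
          hence "K * dist (z, f z) (v, f v) \<le> K*(\<bar>v - z\<bar> + \<bar>f v - f z\<bar>)" using Kpos by simp
          finally show ?thesis .
        qed
        show ?thesis
        proof (rule exI[of _ y], intro conjI allI impI)
          show "x \<le> y" using y by simp
          show "y + e0/2*\<delta> \<le> x + \<delta>" using ediff dl A0 hy by linarith
          fix w assume w: "y < w \<and> w < y + e0/2*\<delta>"
          have wx: "x < w" "w \<le> x + 2*h" using w ediff A1 y using hy by linarith+
          show wI: "w \<in> I" using inI wx by simp
          have wz: "w - z \<le> 2*(e0*h)" using w ediff yz by linarith
          have fwz: "f w > f z"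
          proof (rule ccontr)
            assume "\<not> f w > f z"
            hence "f w - f z \<le> 0" by simp
            have sub2: "{y..w} \<subseteq> I" using inI y wx using hy by auto
            have c2: "continuous_on {y..w} (\<lambda>v. f v - f z)"
              by (intro continuous_intros continuous_on_subset[OF cf sub2])
            have "f y - f z > 0" using key1 arith nn1 by linarith
            then obtain v where v: "y \<le> v" "v \<le> w" "f v - f z = 0"
              using IVT2'[of "\<lambda>v. f v - f z" w 0 y, OF _ _ _ c2] \<open>f w - f z \<le> 0\<close> \<open>f y - f z > 0\<close> w by auto
            have "v \<noteq> y" using v(3) \<open>f y - f z > 0\<close> by auto
            hence vy: "y < v" using v(1) by simp
            have "f y - f z \<le> K*(\<bar>v - z\<bar> + \<bar>f v - f z\<bar>)" using distb[OF vy] sub2 v by auto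
            also have "\<dots> \<le> K*(2*(e0*h))" using v wz zy Kpos by (simp add: mult_left_mono)
            moreover have "K*(2*(e0*h)) = 2*K*(e0*h)" by simp
            ultimately show False using key1 arith nn1 by linarith
          qed
          have d1: "f y - f z \<le> K*(\<bar>w - z\<bar> + (f w - f z))" using distb[of w] w wI fwz by simp
          have d2: "\<bar>w - z\<bar> \<le> 2*(e0*h)" using wz w zy by simp
          have "K*\<bar>w - z\<bar> \<le> K*(2*(e0*h))" using d2 Kpos by (simp add: mult_left_mono)
          have tw: "\<bar>t*(w - z)\<bar> \<le> \<bar>t\<bar>*(2*(e0*h))" using d2 by (simp add: abs_mult mult_left_mono)
          have eqL: "f w - L w = (f w - f z) - t*(w - z)" using z(3) unfolding L_def by (simp add: algebra_simps)
          have "K*(f w - L w) = K*(f w - f z) - K*(t*(w-z))" unfolding eqL by (simp add: right_diff_distrib)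
          have "t*(w-z) \<le> \<bar>t\<bar>*(2*(e0*h))" using tw by linarith
          hence "K*(t*(w-z)) \<le> K*(\<bar>t\<bar>*(2*(e0*h)))" using Kpos by (simp add: mult_left_mono)
          have "K*(f w - L w) > 0"
          proof -
            have "K*(f w - f z) \<ge> f y - f z - K*\<bar>w - z\<bar>" using d1 by (simp add: algebra_simps)
            moreover have "K*(\<bar>t\<bar>*(2*(e0*h))) = 2*K*\<bar>t\<bar>*(e0*h)" by simp
            moreover have "K*(2*(e0*h)) = 2*K*(e0*h)" by simp
            ultimately show ?thesis using key1 arith \<open>K*(f w - L w) = K*(f w - f z) - K*(t*(w-z))\<close>
              \<open>K*(t*(w-z)) \<le> K*(\<bar>t\<bar>*(2*(e0*h)))\<close> \<open>K*\<bar>w - z\<bar> \<le> K*(2*(e0*h))\<close> by linarith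
          qed
          hence "f w > L w" using Kpos by (simp add: zero_less_mult_iff)
          thus "diff_quot f x w > t" using good wx(1) by blast
        qed
      qed
    qed
  qed
qed

lemma meas_contra:
  fixes S B :: "real \<Rightarrow> real set" and e :: real
  assumes S: "\<And>\<delta>. \<delta> > 0 \<Longrightarrow> S \<delta> \<in> fmeasurable lebesgue \<and> measure lebesgue (S \<delta>) = \<delta>"
    and BS: "\<And>\<delta>. B \<delta> \<subseteq> S \<delta>"
    and e: "e > 0"
    and bad: "\<forall>d>0. \<exists>\<delta>>0. \<delta> < d \<and> (\<exists>a. {a<..<a+e*\<delta>} \<subseteq> S \<delta> \<and> B \<delta> \<inter> {a<..<a+e*\<delta>} = {})"
    and lim: "((\<lambda>\<delta>. measure lebesgue (B \<delta>) / \<delta>) \<longlongrightarrow> 1) (at_right 0)"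
  shows False
proof -
  have "eventually (\<lambda>\<delta>. 1 - e < measure lebesgue (B \<delta>) / \<delta>) (at_right 0)"
    using order_tendstoD(1)[OF lim] e by simp
  then obtain b where b: "b > 0" "\<And>\<delta>. \<delta> > 0 \<Longrightarrow> \<delta> < b \<Longrightarrow> 1 - e < measure lebesgue (B \<delta>) / \<delta>"
    unfolding eventually_at_right_field by auto
  obtain \<delta> a where d: "\<delta> > 0" "\<delta> < b" and J: "{a<..<a+e*\<delta>} \<subseteq> S \<delta>" and BJ: "B \<delta> \<inter> {a<..<a+e*\<delta>} = {}"
    using bad b(1) by blast
  define J where "J = {a<..<a+e*\<delta>}"
  have Sf: "S \<delta> \<in> fmeasurable lebesgue" and Sm: "measure lebesgue (S \<delta>) = \<delta>" using S d(1) by auto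
  have Jm: "measure lebesgue J = e*\<delta>" unfolding J_def using e d by simp
  have Js: "J \<in> sets lebesgue" unfolding J_def by simp
  have SJf: "S \<delta> - J \<in> fmeasurable lebesgue" using Sf Js by (intro fmeasurable_Diff) auto
  have SJm: "measure lebesgue (S \<delta> - J) = \<delta> - e*\<delta>"
    using measurable_measure_Diff[OF Sf Js] J Sm Jm unfolding J_def by simp
  have BSJ: "B \<delta> \<subseteq> S \<delta> - J" using BS BJ unfolding J_def by blast
  have "measure lebesgue (B \<delta>) \<le> \<delta> - e*\<delta>"
  proof (cases "B \<delta> \<in> sets lebesgue")
    case True
    thus ?thesis using measure_mono_fmeasurable[OF BSJ True SJf] SJm by simp
  next
    case False
    hence "measure lebesgue (B \<delta>) = 0" by (rule measure_notin_sets)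
    moreover have "measure lebesgue (S \<delta> - J) \<ge> 0" by simp
    ultimately show ?thesis using SJm by simp
  qed
  hence "measure lebesgue (B \<delta>) / \<delta> \<le> 1 - e" using d(1) by (simp add: divide_simps algebra_simps)
  thus False using b(2)[OF d] by simp
qed

lemma meas_one:
  fixes S B :: "real \<Rightarrow> real set"
  assumes S: "\<And>\<delta>. \<delta> > 0 \<Longrightarrow> measure lebesgue (S \<delta>) = \<delta>"
    and ev: "\<exists>d>0. \<forall>\<delta>. 0 < \<delta> \<and> \<delta> < d \<longrightarrow> B \<delta> = S \<delta>"
  shows "((\<lambda>\<delta>. measure lebesgue (B \<delta>) / \<delta>) \<longlongrightarrow> 1) (at_right 0)"
proof (rule tendsto_eventually)
  obtain d where d: "d > 0" "\<forall>\<delta>. 0 < \<delta> \<and> \<delta> < d \<longrightarrow> B \<delta> = S \<delta>" using ev by blast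
  show "eventually (\<lambda>\<delta>. measure lebesgue (B \<delta>) / \<delta> = 1) (at_right 0)"
    unfolding eventually_at_right_field using d S by (intro exI[of _ d]) auto
qed
definition NRp :: "real set \<Rightarrow> (real \<Rightarrow> real) \<Rightarrow> real \<Rightarrow> bool" where
  "NRp I f K \<longleftrightarrow> K \<ge> 1 \<and> (\<forall>z\<in>I. \<forall>y\<in>I. \<forall>w\<in>I. z < y \<and> y < w \<longrightarrow>
     dist (z, f z) (y, f y) \<le> K * dist (z, f z) (w, f w) \<and>
     dist (w, f w) (y, f y) \<le> K * dist (w, f w) (z, f z))"

lemma NRp_neg: "NRp I f K \<Longrightarrow> NRp I (\<lambda>v. - f v) K"
  unfolding NRp_def by (simp add: dist_Pair_Pair dist_real_def abs_minus_commute)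

lemma upper_right:
  fixes f :: "real \<Rightarrow> real" and I and x x1 K :: real
  assumes I: "is_interval I" and cf: "continuous_on I f" and NRp: "NRp I f K"
    and x: "x \<in> I" and x1: "x1 \<in> I" and xx1: "x < x1"
  shows "approx_upper_right f I x = dini_upper_right f I x"
proof -
  have K: "K \<ge> 1" and NR: "\<forall>z\<in>I. \<forall>y\<in>I. \<forall>w\<in>I. z < y \<and> y < w \<longrightarrow> dist (z, f z) (y, f y) \<le> K * dist (z, f z) (w, f w)"
    using NRp unfolding NRp_def by auto
  define D where "D = dini_upper_right f I x"
  define T where "T = {t. ((\<lambda>\<delta>. measure lebesgue {y \<in> I \<inter> {x<..<x+\<delta>}. diff_quot f x y \<le> t} / \<delta>) \<longlongrightarrow> 1) (at_right 0)}"
  have A: "approx_upper_right f I x = Inf (ereal ` T)" unfolding approx_upper_right_def T_def ..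
  have Sm: "\<And>\<delta>. \<delta> > 0 \<Longrightarrow> {x<..<x+\<delta>} \<in> fmeasurable lebesgue \<and> measure lebesgue {x<..<x+\<delta>} = \<delta>" by simp
  have inI: "y \<in> I" if "x < y" "y < x1" for y using mem_is_interval_1_I[OF I x x1] that by simp
  have inT: "t \<in> T" if Dt: "D < ereal t" for t
  proof -
    have "eventually (\<lambda>y. ereal (diff_quot f x y) < ereal t) (at x within (I \<inter> {x<..}))"
      using Limsup_lessD Dt unfolding D_def dini_upper_right_def by blast
    then obtain d where d: "d > 0" "\<forall>y\<in>I \<inter> {x<..}. y \<noteq> x \<and> dist y x < d \<longrightarrow> diff_quot f x y < t"
      unfolding eventually_at by auto
    show ?thesis unfolding T_def mem_Collect_eq
    proof (rule meas_one[where S="\<lambda>\<delta>. {x<..<x+\<delta>}"])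
      show "\<And>\<delta>. \<delta> > 0 \<Longrightarrow> measure lebesgue {x<..<x+\<delta>} = \<delta>" by simp
      show "\<exists>d>0. \<forall>\<delta>. 0 < \<delta> \<and> \<delta> < d \<longrightarrow> {y \<in> I \<inter> {x<..<x+\<delta>}. diff_quot f x y \<le> t} = {x<..<x+\<delta>}"
      proof (rule exI[of _ "min d (x1 - x)"], intro conjI allI impI)
        show "min d (x1 - x) > 0" using d xx1 by simp
        fix \<delta> assume \<delta>: "0 < \<delta> \<and> \<delta> < min d (x1 - x)"
        show "{y \<in> I \<inter> {x<..<x+\<delta>}. diff_quot f x y \<le> t} = {x<..<x+\<delta>}"
        proof (intro set_eqI iffI)
          fix y assume y: "y \<in> {x<..<x+\<delta>}"
          hence yI: "y \<in> I" using inI \<delta> by auto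
          have "dist y x < d" using y \<delta> by (simp add: dist_real_def)
          hence "diff_quot f x y < t" using d(2) yI y by auto
          thus "y \<in> {y \<in> I \<inter> {x<..<x+\<delta>}. diff_quot f x y \<le> t}" using yI y by simp
        qed simp
      qed
    qed
  qed
  have le: "Inf (ereal ` T) \<le> D"
  proof (rule dense_ge)
    fix u assume Du: "D < u"
    show "Inf (ereal ` T) \<le> u"
    proof (cases u)
      case (real t)
      hence "t \<in> T" using inT Du by simp
      thus ?thesis using real by (simp add: Inf_lower)
    next
      case PInf thus ?thesis by simp
    next
      case MInf thus ?thesis using Du by simp
    qed
  qed
  have ge: "D \<le> Inf (ereal ` T)"
  proof (rule Inf_greatest)
    fix u assume "u \<in> ereal ` T"
    then obtain t where tT: "t \<in> T" and u: "u = ereal t" by blast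
    show "D \<le> u"
    proof (rule ccontr)
      assume "\<not> D \<le> u"
      hence "ereal t < D" using u by simp
      then obtain s where ts': "ereal t < ereal s" and sD: "ereal s < D" using ereal_dense2 by blast
      have ts: "t < s" using ts' by simp
      have freq: "\<forall>d>0. \<exists>y\<in>I. x < y \<and> y < x + d \<and> diff_quot f x y > s"
      proof (rule ccontr)
        assume "\<not> (\<forall>d>0. \<exists>y\<in>I. x < y \<and> y < x + d \<and> diff_quot f x y > s)"
        then obtain d where d: "d > 0" "\<forall>y\<in>I. x < y \<and> y < x + d \<longrightarrow> diff_quot f x y \<le> s"
          by (meson linorder_not_less)
        have "eventually (\<lambda>y. ereal (diff_quot f x y) \<le> ereal s) (at x within (I \<inter> {x<..}))"
          unfolding eventually_at using d by (intro exI[of _ d]) (auto simp: dist_real_def)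
        hence "D \<le> ereal s" unfolding D_def dini_upper_right_def by (rule Limsup_bounded)
        thus False using sD by simp
      qed
      obtain e where e: "e > 0" and bad: "\<forall>d>0. \<exists>\<delta>>0. \<delta> < d \<and> (\<exists>a. x \<le> a \<and> a + e*\<delta> \<le> x + \<delta> \<and>
            (\<forall>y. a < y \<and> y < a + e*\<delta> \<longrightarrow> y \<in> I \<and> diff_quot f x y > t))"
        using core_right[OF I cf NR K x x1 xx1 ts freq] by blast
      show False
      proof (rule meas_contra[where S = "\<lambda>\<delta>. {x<..<x+\<delta>}" and B = "\<lambda>\<delta>. {y \<in> I \<inter> {x<..<x+\<delta>}. diff_quot f x y \<le> t}" and e = e])
        show "\<And>\<delta>. \<delta> > 0 \<Longrightarrow> {x<..<x+\<delta>} \<in> fmeasurable lebesgue \<and> measure lebesgue {x<..<x+\<delta>} = \<delta>" by simp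
        show "\<And>\<delta>. {y \<in> I \<inter> {x<..<x+\<delta>}. diff_quot f x y \<le> t} \<subseteq> {x<..<x+\<delta>}" by auto
        show "e > 0" by (rule e)
        show "((\<lambda>\<delta>. measure lebesgue {y \<in> I \<inter> {x<..<x+\<delta>}. diff_quot f x y \<le> t} / \<delta>) \<longlongrightarrow> 1) (at_right 0)"
          using tT unfolding T_def by simp
        show "\<forall>d>0. \<exists>\<delta>>0. \<delta> < d \<and> (\<exists>a. {a<..<a+e*\<delta>} \<subseteq> {x<..<x+\<delta>} \<and>
                {y \<in> I \<inter> {x<..<x+\<delta>}. diff_quot f x y \<le> t} \<inter> {a<..<a+e*\<delta>} = {})"
        proof (intro allI impI)
          fix d :: real assume "d > 0"
          then obtain \<delta> a where \<delta>: "\<delta> > 0" "\<delta> < d" and a: "x \<le> a" "a + e*\<delta> \<le> x + \<delta>"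
            and ga: "\<forall>y. a < y \<and> y < a + e*\<delta> \<longrightarrow> y \<in> I \<and> diff_quot f x y > t" using bad by blast
          have "{a<..<a+e*\<delta>} \<subseteq> {x<..<x+\<delta>}" using a by auto
          moreover have "{y \<in> I \<inter> {x<..<x+\<delta>}. diff_quot f x y \<le> t} \<inter> {a<..<a+e*\<delta>} = {}"
            using ga by force
          ultimately show "\<exists>\<delta>>0. \<delta> < d \<and> (\<exists>a. {a<..<a+e*\<delta>} \<subseteq> {x<..<x+\<delta>} \<and>
                {y \<in> I \<inter> {x<..<x+\<delta>}. diff_quot f x y \<le> t} \<inter> {a<..<a+e*\<delta>} = {})"
            using \<delta> by blast
        qed
      qed
    qed
  qed
  show ?thesis using A le ge unfolding D_def by simp
qed

lemma dist_refl_neg: "dist (a::real, - (b::real)) (c, - d) = dist (- a, b) (- c, d)"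
  by (simp add: dist_Pair_Pair dist_real_def abs_minus_commute)

lemma core_left:
  fixes f :: "real \<Rightarrow> real" and I and x x0 K t s :: real
  assumes I: "is_interval I" and cf: "continuous_on I f"
    and NR2: "\<forall>z\<in>I. \<forall>y\<in>I. \<forall>w\<in>I. z < y \<and> y < w \<longrightarrow> dist (w, f w) (y, f y) \<le> K * dist (w, f w) (z, f z)"
    and K: "K \<ge> 1" and x: "x \<in> I" and x0: "x0 \<in> I" and x0x: "x0 < x" and ts: "t < s"
    and freq: "\<forall>d>0. \<exists>y\<in>I. x - d < y \<and> y < x \<and> diff_quot f x y > s"
  shows "\<exists>e>0. \<forall>d>0. \<exists>\<delta>>0. \<delta> < d \<and> (\<exists>a. x - \<delta> \<le> a \<and> a + e*\<delta> \<le> x \<and>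
            (\<forall>y. a < y \<and> y < a + e*\<delta> \<longrightarrow> y \<in> I \<and> diff_quot f x y > t))"
proof -
  define g where "g = (\<lambda>v. - f (- v))"
  define J where "J = uminus ` I"
  have memJ: "v \<in> J \<longleftrightarrow> - v \<in> I" for v unfolding J_def by force
  have J: "is_interval J" unfolding J_def by (rule is_interval_uminusI[OF I])
  have cg: "continuous_on J g"
  proof -
    have "continuous_on J (\<lambda>v. f (- v))"
      by (rule continuous_on_compose2[OF cf]) (auto intro: continuous_intros simp: memJ)
    thus ?thesis unfolding g_def by (intro continuous_intros)
  qed
  have dq: "diff_quot g (- x) y' = diff_quot f x (- y')" for y'
  proof -
    have "diff_quot g (- x) y' = (- (f (- y') - f x)) / (- (- y' - x))"
      unfolding diff_quot_def g_def by (simp add: algebra_simps)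
    also have "\<dots> = diff_quot f x (- y')" unfolding diff_quot_def by (rule minus_divide_divide)
    finally show ?thesis .
  qed
  have NRg: "\<forall>z\<in>J. \<forall>y\<in>J. \<forall>w\<in>J. z < y \<and> y < w \<longrightarrow> dist (z, g z) (y, g y) \<le> K * dist (z, g z) (w, g w)"
  proof (intro ballI impI)
    fix z y w assume zyw: "z \<in> J" "y \<in> J" "w \<in> J" and o: "z < y \<and> y < w"
    have "dist (- z, f (- z)) (- y, f (- y)) \<le> K * dist (- z, f (- z)) (- w, f (- w))"
      using NR2 zyw o unfolding memJ by auto
    thus "dist (z, g z) (y, g y) \<le> K * dist (z, g z) (w, g w)"
      unfolding g_def dist_refl_neg by simp
  qed
  have freq': "\<forall>d>0. \<exists>y\<in>J. - x < y \<and> y < - x + d \<and> diff_quot g (- x) y > s"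
  proof (intro allI impI)
    fix d :: real assume "d > 0"
    then obtain y where "y \<in> I" "x - d < y" "y < x" "diff_quot f x y > s" using freq by blast
    thus "\<exists>y\<in>J. - x < y \<and> y < - x + d \<and> diff_quot g (- x) y > s"
      by (intro bexI[of _ "- y"]) (auto simp: dq memJ)
  qed
  have xJ: "- x \<in> J" and x0J: "- x0 \<in> J" using x x0 by (auto simp: memJ)
  obtain e where e: "e > 0" and bad: "\<forall>d>0. \<exists>\<delta>>0. \<delta> < d \<and> (\<exists>a. - x \<le> a \<and> a + e*\<delta> \<le> - x + \<delta> \<and>
            (\<forall>y. a < y \<and> y < a + e*\<delta> \<longrightarrow> y \<in> J \<and> diff_quot g (- x) y > t))"
    using core_right[OF J cg NRg K xJ x0J _ ts freq'] x0x by auto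
  show ?thesis
  proof (rule exI[of _ e], intro conjI allI impI)
    show "e > 0" by (rule e)
    fix d :: real assume "d > 0"
    then obtain \<delta> a where \<delta>: "\<delta> > 0" "\<delta> < d" and a: "- x \<le> a" "a + e*\<delta> \<le> - x + \<delta>"
      and ga: "\<forall>y. a < y \<and> y < a + e*\<delta> \<longrightarrow> y \<in> J \<and> diff_quot g (- x) y > t" using bad by blast
    show "\<exists>\<delta>>0. \<delta> < d \<and> (\<exists>a. x - \<delta> \<le> a \<and> a + e*\<delta> \<le> x \<and>
            (\<forall>y. a < y \<and> y < a + e*\<delta> \<longrightarrow> y \<in> I \<and> diff_quot f x y > t))"
    proof (rule exI[of _ \<delta>], intro conjI)
      show "\<delta> > 0" "\<delta> < d" using \<delta> by auto
      show "\<exists>a. x - \<delta> \<le> a \<and> a + e*\<delta> \<le> x \<and> (\<forall>y. a < y \<and> y < a + e*\<delta> \<longrightarrow> y \<in> I \<and> diff_quot f x y > t)"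
      proof (rule exI[of _ "- (a + e*\<delta>)"], intro conjI allI impI)
        show "x - \<delta> \<le> - (a + e*\<delta>)" using a by linarith
        show "- (a + e*\<delta>) + e*\<delta> \<le> x" using a by linarith
        fix y assume y: "- (a + e*\<delta>) < y \<and> y < - (a + e*\<delta>) + e*\<delta>"
        have "a < - y \<and> - y < a + e*\<delta>" using y by linarith
        hence "- y \<in> J \<and> diff_quot g (- x) (- y) > t" using ga by blast
        thus "y \<in> I" "diff_quot f x y > t" by (auto simp: memJ dq)
      qed
    qed
  qed
qed

lemma upper_left:
  fixes f :: "real \<Rightarrow> real" and I and x x0 K :: real
  assumes I: "is_interval I" and cf: "continuous_on I f" and NRp: "NRp I f K"
    and x: "x \<in> I" and x0: "x0 \<in> I" and x0x: "x0 < x"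
  shows "approx_upper_left f I x = dini_upper_left f I x"
proof -
  have K: "K \<ge> 1" and NR2: "\<forall>z\<in>I. \<forall>y\<in>I. \<forall>w\<in>I. z < y \<and> y < w \<longrightarrow> dist (w, f w) (y, f y) \<le> K * dist (w, f w) (z, f z)"
    using NRp unfolding NRp_def by auto
  define D where "D = dini_upper_left f I x"
  define T where "T = {t. ((\<lambda>\<delta>. measure lebesgue {y \<in> I \<inter> {x-\<delta><..<x}. diff_quot f x y \<le> t} / \<delta>) \<longlongrightarrow> 1) (at_right 0)}"
  have A: "approx_upper_left f I x = Inf (ereal ` T)" unfolding approx_upper_left_def T_def ..
  have Sm: "\<And>\<delta>. \<delta> > 0 \<Longrightarrow> {x-\<delta><..<x} \<in> fmeasurable lebesgue \<and> measure lebesgue {x-\<delta><..<x} = \<delta>" by simp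
  have inI: "y \<in> I" if "x0 < y" "y < x" for y using mem_is_interval_1_I[OF I x0 x] that by simp
  have inT: "t \<in> T" if Dt: "D < ereal t" for t
  proof -
    have "eventually (\<lambda>y. ereal (diff_quot f x y) < ereal t) (at x within (I \<inter> {..<x}))"
      using Limsup_lessD Dt unfolding D_def dini_upper_left_def by blast
    then obtain d where d: "d > 0" "\<forall>y\<in>I \<inter> {..<x}. y \<noteq> x \<and> dist y x < d \<longrightarrow> diff_quot f x y < t"
      unfolding eventually_at by auto
    show ?thesis unfolding T_def mem_Collect_eq
    proof (rule meas_one[where S="\<lambda>\<delta>. {x-\<delta><..<x}"])
      show "\<And>\<delta>. \<delta> > 0 \<Longrightarrow> measure lebesgue {x-\<delta><..<x} = \<delta>" by simp
      show "\<exists>d>0. \<forall>\<delta>. 0 < \<delta> \<and> \<delta> < d \<longrightarrow> {y \<in> I \<inter> {x-\<delta><..<x}. diff_quot f x y \<le> t} = {x-\<delta><..<x}"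
      proof (rule exI[of _ "min d (x - x0)"], intro conjI allI impI)
        show "min d (x - x0) > 0" using d x0x by simp
        fix \<delta> assume \<delta>: "0 < \<delta> \<and> \<delta> < min d (x - x0)"
        show "{y \<in> I \<inter> {x-\<delta><..<x}. diff_quot f x y \<le> t} = {x-\<delta><..<x}"
        proof (intro set_eqI iffI)
          fix y assume y: "y \<in> {x-\<delta><..<x}"
          hence yI: "y \<in> I" using inI \<delta> by auto
          have "dist y x < d" using y \<delta> by (simp add: dist_real_def)
          hence "diff_quot f x y < t" using d(2) yI y by auto
          thus "y \<in> {y \<in> I \<inter> {x-\<delta><..<x}. diff_quot f x y \<le> t}" using yI y by simp
        qed simp
      qed
    qed
  qed
  have le: "Inf (ereal ` T) \<le> D"
  proof (rule dense_ge)
    fix u assume Du: "D < u"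
    show "Inf (ereal ` T) \<le> u"
    proof (cases u)
      case (real t)
      hence "t \<in> T" using inT Du by simp
      thus ?thesis using real by (simp add: Inf_lower)
    next
      case PInf thus ?thesis by simp
    next
      case MInf thus ?thesis using Du by simp
    qed
  qed
  have ge: "D \<le> Inf (ereal ` T)"
  proof (rule Inf_greatest)
    fix u assume "u \<in> ereal ` T"
    then obtain t where tT: "t \<in> T" and u: "u = ereal t" by blast
    show "D \<le> u"
    proof (rule ccontr)
      assume "\<not> D \<le> u"
      hence "ereal t < D" using u by simp
      then obtain s where ts': "ereal t < ereal s" and sD: "ereal s < D" using ereal_dense2 by blast
      have ts: "t < s" using ts' by simp
      have freq: "\<forall>d>0. \<exists>y\<in>I. x - d < y \<and> y < x \<and> diff_quot f x y > s"
      proof (rule ccontr)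
        assume "\<not> (\<forall>d>0. \<exists>y\<in>I. x - d < y \<and> y < x \<and> diff_quot f x y > s)"
        then obtain d where d: "d > 0" "\<forall>y\<in>I. x - d < y \<and> y < x \<longrightarrow> diff_quot f x y \<le> s"
          by (meson linorder_not_less)
        have "eventually (\<lambda>y. ereal (diff_quot f x y) \<le> ereal s) (at x within (I \<inter> {..<x}))"
          unfolding eventually_at using d by (intro exI[of _ d]) (auto simp: dist_real_def)
        hence "D \<le> ereal s" unfolding D_def dini_upper_left_def by (rule Limsup_bounded)
        thus False using sD by simp
      qed
      obtain e where e: "e > 0" and bad: "\<forall>d>0. \<exists>\<delta>>0. \<delta> < d \<and> (\<exists>a. x - \<delta> \<le> a \<and> a + e*\<delta> \<le> x \<and>
            (\<forall>y. a < y \<and> y < a + e*\<delta> \<longrightarrow> y \<in> I \<and> diff_quot f x y > t))"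
        using core_left[OF I cf NR2 K x x0 x0x ts freq] by blast
      show False
      proof (rule meas_contra[where S = "\<lambda>\<delta>. {x-\<delta><..<x}" and B = "\<lambda>\<delta>. {y \<in> I \<inter> {x-\<delta><..<x}. diff_quot f x y \<le> t}" and e = e])
        show "\<And>\<delta>. \<delta> > 0 \<Longrightarrow> {x-\<delta><..<x} \<in> fmeasurable lebesgue \<and> measure lebesgue {x-\<delta><..<x} = \<delta>" by simp
        show "\<And>\<delta>. {y \<in> I \<inter> {x-\<delta><..<x}. diff_quot f x y \<le> t} \<subseteq> {x-\<delta><..<x}" by auto
        show "e > 0" by (rule e)
        show "((\<lambda>\<delta>. measure lebesgue {y \<in> I \<inter> {x-\<delta><..<x}. diff_quot f x y \<le> t} / \<delta>) \<longlongrightarrow> 1) (at_right 0)"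
          using tT unfolding T_def by simp
        show "\<forall>d>0. \<exists>\<delta>>0. \<delta> < d \<and> (\<exists>a. {a<..<a+e*\<delta>} \<subseteq> {x-\<delta><..<x} \<and>
                {y \<in> I \<inter> {x-\<delta><..<x}. diff_quot f x y \<le> t} \<inter> {a<..<a+e*\<delta>} = {})"
        proof (intro allI impI)
          fix d :: real assume "d > 0"
          then obtain \<delta> a where \<delta>: "\<delta> > 0" "\<delta> < d" and a: "x - \<delta> \<le> a" "a + e*\<delta> \<le> x"
            and ga: "\<forall>y. a < y \<and> y < a + e*\<delta> \<longrightarrow> y \<in> I \<and> diff_quot f x y > t" using bad by blast
          have "{a<..<a+e*\<delta>} \<subseteq> {x-\<delta><..<x}" using a by auto
          moreover have "{y \<in> I \<inter> {x-\<delta><..<x}. diff_quot f x y \<le> t} \<inter> {a<..<a+e*\<delta>} = {}"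
            using ga by force
          ultimately show "\<exists>\<delta>>0. \<delta> < d \<and> (\<exists>a. {a<..<a+e*\<delta>} \<subseteq> {x-\<delta><..<x} \<and>
                {y \<in> I \<inter> {x-\<delta><..<x}. diff_quot f x y \<le> t} \<inter> {a<..<a+e*\<delta>} = {})"
            using \<delta> by blast
        qed
      qed
    qed
  qed
  show ?thesis using A le ge unfolding D_def by simp
qed


lemma dq_neg: "diff_quot (\<lambda>v. - f v) x y = - diff_quot f x y"
  unfolding diff_quot_def minus_divide_left by simp

lemma lower_right:
  fixes f :: "real \<Rightarrow> real" and I and x x1 K :: real
  assumes I: "is_interval I" and cf: "continuous_on I f" and NRp: "NRp I f K"
    and x: "x \<in> I" and x1: "x1 \<in> I" and xx1: "x < x1"
  shows "approx_lower_right f I x = dini_lower_right f I x"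
proof -
  have u: "approx_upper_right (\<lambda>v. - f v) I x = dini_upper_right (\<lambda>v. - f v) I x"
    by (rule upper_right[OF I _ NRp_neg[OF NRp] x x1 xx1]) (intro continuous_intros cf)
  have d: "dini_upper_right (\<lambda>v. - f v) I x = - dini_lower_right f I x"
    unfolding dini_upper_right_def dini_lower_right_def dq_neg
    using ereal_Limsup_uminus[of _ "\<lambda>y. ereal (diff_quot f x y)"] by simp
  define Tm where "Tm = {t. ((\<lambda>\<delta>. measure lebesgue {y \<in> I \<inter> {x<..<x+\<delta>}. diff_quot (\<lambda>v. - f v) x y \<le> t} / \<delta>) \<longlongrightarrow> 1) (at_right 0)}"
  define Tl where "Tl = {t. ((\<lambda>\<delta>. measure lebesgue {y \<in> I \<inter> {x<..<x+\<delta>}. diff_quot f x y \<ge> t} / \<delta>) \<longlongrightarrow> 1) (at_right 0)}"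
  have TT: "Tl = uminus ` Tm"
  proof -
    have key: "t \<in> Tm \<longleftrightarrow> - t \<in> Tl" for t
    proof -
      have "{y \<in> I \<inter> {x<..<x+\<delta>}. diff_quot (\<lambda>v. - f v) x y \<le> t} = {y \<in> I \<inter> {x<..<x+\<delta>}. diff_quot f x y \<ge> - t}" for \<delta>
        by (auto simp: dq_neg)
      thus ?thesis unfolding Tm_def Tl_def by simp
    qed
    show ?thesis
    proof (rule set_eqI)
      fix t
      have "t \<in> uminus ` Tm \<longleftrightarrow> - t \<in> Tm" by (metis image_eqI minus_minus imageE)
      thus "t \<in> Tl \<longleftrightarrow> t \<in> uminus ` Tm" using key[of "- t"] by simp
    qed
  qed
  have "approx_lower_right f I x = Sup (ereal ` Tl)" unfolding approx_lower_right_def Tl_def ..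
  also have "ereal ` Tl = uminus ` (ereal ` Tm)" unfolding TT image_image by simp
  also have "Sup (uminus ` (ereal ` Tm)) = - Inf (ereal ` Tm)" by (rule ereal_Sup_uminus_image_eq)
  also have "Inf (ereal ` Tm) = approx_upper_right (\<lambda>v. - f v) I x" unfolding approx_upper_right_def Tm_def ..
  finally show ?thesis using u d by simp
qed

lemma lower_left:
  fixes f :: "real \<Rightarrow> real" and I and x x0 K :: real
  assumes I: "is_interval I" and cf: "continuous_on I f" and NRp: "NRp I f K"
    and x: "x \<in> I" and x0: "x0 \<in> I" and x0x: "x0 < x"
  shows "approx_lower_left f I x = dini_lower_left f I x"
proof -
  have u: "approx_upper_left (\<lambda>v. - f v) I x = dini_upper_left (\<lambda>v. - f v) I x"
    by (rule upper_left[OF I _ NRp_neg[OF NRp] x x0 x0x]) (intro continuous_intros cf)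
  have d: "dini_upper_left (\<lambda>v. - f v) I x = - dini_lower_left f I x"
    unfolding dini_upper_left_def dini_lower_left_def dq_neg
    using ereal_Limsup_uminus[of _ "\<lambda>y. ereal (diff_quot f x y)"] by simp
  define Tm where "Tm = {t. ((\<lambda>\<delta>. measure lebesgue {y \<in> I \<inter> {x-\<delta><..<x}. diff_quot (\<lambda>v. - f v) x y \<le> t} / \<delta>) \<longlongrightarrow> 1) (at_right 0)}"
  define Tl where "Tl = {t. ((\<lambda>\<delta>. measure lebesgue {y \<in> I \<inter> {x-\<delta><..<x}. diff_quot f x y \<ge> t} / \<delta>) \<longlongrightarrow> 1) (at_right 0)}"
  have TT: "Tl = uminus ` Tm"
  proof -
    have key: "t \<in> Tm \<longleftrightarrow> - t \<in> Tl" for t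
    proof -
      have "{y \<in> I \<inter> {x-\<delta><..<x}. diff_quot (\<lambda>v. - f v) x y \<le> t} = {y \<in> I \<inter> {x-\<delta><..<x}. diff_quot f x y \<ge> - t}" for \<delta>
        by (auto simp: dq_neg)
      thus ?thesis unfolding Tm_def Tl_def by simp
    qed
    show ?thesis
    proof (rule set_eqI)
      fix t
      have "t \<in> uminus ` Tm \<longleftrightarrow> - t \<in> Tm" by (metis image_eqI minus_minus imageE)
      thus "t \<in> Tl \<longleftrightarrow> t \<in> uminus ` Tm" using key[of "- t"] by simp
    qed
  qed
  have "approx_lower_left f I x = Sup (ereal ` Tl)" unfolding approx_lower_left_def Tl_def ..
  also have "ereal ` Tl = uminus ` (ereal ` Tm)" unfolding TT image_image by simp
  also have "Sup (uminus ` (ereal ` Tm)) = - Inf (ereal ` Tm)" by (rule ereal_Sup_uminus_image_eq)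
  also have "Inf (ereal ` Tm) = approx_upper_left (\<lambda>v. - f v) I x" unfolding approx_upper_left_def Tm_def ..
  finally show ?thesis using u d by simp
qed

theorem proposition4p1:
  fixes I :: "real set" and f :: "real \<Rightarrow> real"
  assumes "is_interval I"
    and "\<exists>a\<in>I. \<exists>b\<in>I. a < b"
    and "continuous_on I f"
    and "monotone_metric_space (graph_on I f) dist"
  shows "(\<forall>x\<in>I. (\<exists>y\<in>I. x < y) \<longrightarrow>
            approx_upper_right f I x = dini_upper_right f I x \<and>
            approx_lower_right f I x = dini_lower_right f I x) \<and>
         (\<forall>x\<in>I. (\<exists>y\<in>I. y < x) \<longrightarrow>
            approx_upper_left f I x = dini_upper_left f I x \<and>
            approx_lower_left f I x = dini_lower_left f I x)"
proof -
  obtain K where "NRp I f K"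
    using NR_from_monotone[OF assms(1,3,4)] unfolding NRp_def by blast
  thus ?thesis
    using upper_right[OF assms(1,3)] lower_right[OF assms(1,3)]
      upper_left[OF assms(1,3)] lower_left[OF assms(1,3)] by blast
qed

end
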